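(* Fix $\phi\in(0,1)$. For $\gamma_1,\gamma_2>0$ let $z_1(\gamma_1,\gamma_2),z_2(\gamma_1,\gamma_2)$ be the two (possibly complex) roots of $z^2-(2-\gamma_1-\gamma_2+\gamma_1\gamma_2\phi)z+(1-\gamma_1)(1-\gamma_2)=0$ and $f(\gamma_1,\gamma_2):=\max\{|z_1(\gamma_1,\gamma_2)|,|z_2(\gamma_1,\gamma_2)|\}$. Then: (1) For each fixed $\gamma_1\in(0,1]$, $\gamma_2\mapsto f(\gamma_1,\gamma_2)$ is non-increasing on $(0,1]$; for each fixed $\gamma_2\in(0,1]$, $\gamma_1\mapsto f(\gamma_1,\gamma_2)$ is non-increasing on $(0,1]$. Hence $\min_{(\gamma_1,\gamma_2)\in(0,1]^2}f(\gamma_1,\gamma_2)=f(1,1)$. (2) For each fixed $\gamma_2\in[1,\infty)$, $\gamma_1\mapsto f(\gamma_1,\gamma_2)$ is non-increasing on $(0,1]$; for each fixed $\gamma_1\in[1,\infty)$, $\gamma_2\mapsto f(\gamma_1,\gamma_2)$ is non-increasing on $(0,1]$. Hence $\min_{(\gamma_1,\gamma_2)\in(0,1]\times[1,\infty)}f=\min_{\gamma_2\ge1}f(1,\gamma_2)$ and $\min_{(\gamma_1,\gamma_2)\in[1,\infty)\times(0,1]}f=\min_{\gamma_1\ge1}f(\gamma_1,1)$. *)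

theory Defs
  imports Complex_Main
begin

definition rootmax :: "real \<Rightarrow> real \<Rightarrow> real \<Rightarrow> real" where
  "rootmax \<phi> g1 g2 = Max (cmod ` {z::complex.
      z^2 - complex_of_real (2 - g1 - g2 + g1 * g2 * \<phi>) * z
        + complex_of_real ((1 - g1) * (1 - g2)) = 0})"

end

theory Submission
  imports Defs
begin

definition R :: "real \<Rightarrow> real \<Rightarrow> real" where
 "R B C = (if 0 \<le> B^2 - 4*C then (\<bar>B\<bar> + sqrt (B^2 - 4*C))/2 else sqrt C)"

lemma roots_set:
  fixes B C :: real
  defines "D \<equiv> B^2 - 4*C"
  defines "s \<equiv> (if 0 \<le> D then complex_of_real (sqrt D / 2) else \<i> * complex_of_real (sqrt (-D)/2))"
  shows "{z::complex. z^2 - complex_of_real B * z + complex_of_real C = 0}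
     = {complex_of_real (B/2) + s, complex_of_real (B/2) - s}"
proof -
  have s2: "s^2 = complex_of_real (D/4)"
  proof (cases "0 \<le> D")
    case True
    then have t2: "(sqrt D / 2)^2 = D/4" by (simp add: power_divide)
    have "s^2 = complex_of_real ((sqrt D / 2)^2)"
      by (simp only: s_def if_P[OF True] of_real_power)
    then show ?thesis by (simp only: t2)
  next
    case False
    then have t2: "(sqrt (-D) / 2)^2 = -D/4" by (simp add: power_divide)
    have "s^2 = \<i>^2 * (complex_of_real (sqrt (-D) / 2))^2"
      by (simp only: s_def if_not_P[OF False] power_mult_distrib)
    also have "\<dots> = - complex_of_real ((sqrt (-D) / 2)^2)"
      by (simp only: of_real_power power2_i mult_minus_left mult_1_left)
    also have "\<dots> = complex_of_real (D/4)" by (simp only: t2) simp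
    finally show ?thesis .
  qed
  have eq: "z^2 - complex_of_real B * z + complex_of_real C = (z - complex_of_real (B/2))^2 - s^2" for z
    using s2 by (simp add: D_def power2_eq_square algebra_simps)
  show ?thesis
  proof (rule set_eqI)
    fix z
    have "z \<in> {z::complex. z^2 - complex_of_real B * z + complex_of_real C = 0}
       \<longleftrightarrow> (z - complex_of_real (B/2))^2 = s^2" by (simp add: eq)
    also have "\<dots> \<longleftrightarrow> z - complex_of_real (B/2) = s \<or> z - complex_of_real (B/2) = -s"
      by (rule power2_eq_iff)
    also have "\<dots> \<longleftrightarrow> z \<in> {complex_of_real (B/2) + s, complex_of_real (B/2) - s}"
      by (auto simp: algebra_simps)
    finally show "z \<in> {z::complex. z^2 - complex_of_real B * z + complex_of_real C = 0}
       \<longleftrightarrow> z \<in> {complex_of_real (B/2) + s, complex_of_real (B/2) - s}" .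
  qed
qed

lemma max_abs_aux: "(d::real) \<ge> 0 \<Longrightarrow> max \<bar>B/2 + d/2\<bar> \<bar>B/2 - d/2\<bar> = (\<bar>B\<bar> + d)/2"
  by (auto simp: max_def abs_if)

lemma Max_roots:
  fixes B C :: real
  shows "Max (cmod ` {z::complex. z^2 - complex_of_real B * z + complex_of_real C = 0}) = R B C"
proof -
  define D where "D = B^2 - 4*C"
  define s where "s = (if 0 \<le> D then complex_of_real (sqrt D / 2) else \<i> * complex_of_real (sqrt (-D)/2))"
  have S: "{z::complex. z^2 - complex_of_real B * z + complex_of_real C = 0}
     = {complex_of_real (B/2) + s, complex_of_real (B/2) - s}"
    unfolding s_def D_def by (rule roots_set)
  have M: "Max (cmod ` {z::complex. z^2 - complex_of_real B * z + complex_of_real C = 0})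
     = max (cmod (complex_of_real (B/2) + s)) (cmod (complex_of_real (B/2) - s))"
    unfolding S by simp
  show ?thesis
  proof (cases "0 \<le> D")
    case True
    have a0: "complex_of_real (B/2) + s = complex_of_real (B/2 + sqrt D/2)"
      using True unfolding s_def by simp
    have b0: "complex_of_real (B/2) - s = complex_of_real (B/2 - sqrt D/2)"
      using True unfolding s_def by simp
    have a: "cmod (complex_of_real (B/2) + s) = \<bar>B/2 + sqrt D/2\<bar>"
      unfolding a0 norm_of_real ..
    have b: "cmod (complex_of_real (B/2) - s) = \<bar>B/2 - sqrt D/2\<bar>"
      unfolding b0 norm_of_real ..
    have "max \<bar>B/2 + sqrt D/2\<bar> \<bar>B/2 - sqrt D/2\<bar> = (\<bar>B\<bar> + sqrt D)/2"
      using max_abs_aux[OF real_sqrt_ge_zero[OF True]] .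
    then show ?thesis using True unfolding M a b R_def D_def by simp
  next
    case False
    have c: "cmod (complex_of_real (B/2) + s) = sqrt C"
      using False unfolding s_def cmod_def
      apply (simp add: power_divide D_def)
      by (simp add: field_simps)
    have d: "cmod (complex_of_real (B/2) - s) = sqrt C"
      using False unfolding s_def cmod_def
      apply (simp add: power_divide D_def)
      by (simp add: field_simps)
    show ?thesis using False unfolding M c d R_def D_def by simp
  qed
qed

lemma sqrt4: "sqrt (4::real) = 2"
  by (metis abs_numeral real_sqrt_abs power2_eq_square numeral_times_numeral semiring_norm(12) semiring_norm(13))

lemma R_ge:
  fixes x B C :: real
  assumes "x^2 - B*x + C \<le> 0"
  shows "0 \<le> B^2 - 4*C \<and> x \<le> (B + sqrt (B^2 - 4*C))/2 \<and> \<bar>x\<bar> \<le> R B C"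
proof -
  define D where "D = B^2 - 4*C"
  have e: "(x - B/2)^2 = x^2 - B*x + C + D/4" unfolding D_def by (simp add: power2_eq_square field_simps)
  have h: "(x - B/2)^2 \<le> D/4" using e assms by linarith
  have D0: "0 \<le> D" using h by (metis zero_le_power2 order_trans divide_nonneg_pos zero_less_numeral divide_le_0_iff le_less_trans not_le order.strict_iff_not zero_le_divide_iff)
  have "sqrt ((x - B/2)^2) \<le> sqrt (D/4)" using h real_sqrt_le_mono by blast
  then have a: "\<bar>x - B/2\<bar> \<le> sqrt D / 2" by (simp add: real_sqrt_divide sqrt4)
  have "0 \<le> sqrt D" using D0 by simp
  have a1: "x - B/2 \<le> sqrt D / 2" and a2: "-(x - B/2) \<le> sqrt D / 2" using a by linarith+
  have RR: "R B C = (\<bar>B\<bar> + sqrt D)/2" using D0 unfolding R_def D_def by simp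
  have "\<bar>x\<bar> \<le> R B C" unfolding RR abs_le_iff using a1 a2 abs_ge_self[of B] abs_ge_minus_self[of B] by (intro conjI; argo)
  then show ?thesis using a1 D0 unfolding D_def by simp
qed

lemma R_sqrtC:
  fixes B C :: real
  assumes "0 \<le> C"
  shows "sqrt C \<le> R B C"
proof (cases "0 \<le> B^2 - 4*C")
  case True
  then have "sqrt (4*C) \<le> sqrt (B^2)" by (intro real_sqrt_le_mono) simp
  then have "2 * sqrt C \<le> \<bar>B\<bar>" by (simp add: real_sqrt_mult sqrt4)
  moreover have "0 \<le> sqrt (B^2 - 4*C)" using True by simp
  moreover have RR: "R B C = (\<bar>B\<bar> + sqrt (B^2 - 4*C))/2" using True unfolding R_def by simp
  ultimately show ?thesis unfolding RR by argo
next
  case False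
  then show ?thesis using assms unfolding R_def by simp
qed

lemma R_nonneg: "0 \<le> R B C"
proof (cases "0 \<le> B^2 - 4*C")
  case True then show ?thesis unfolding R_def by simp
next
  case False
  have "0 \<le> B^2" by simp
  then have "0 \<le> C" using False by linarith
  then show ?thesis using False unfolding R_def by simp
qed

lemma root_eq:
  fixes B C s :: real
  assumes "s*s = B^2 - 4*C"
  shows "((B+s)/2)^2 - B*((B+s)/2) + C = 0" "((B-s)/2)^2 - B*((B-s)/2) + C = 0"
  using assms by (simp_all add: power2_eq_square field_simps)



lemma M1:
  fixes \<phi> g a b :: real
  assumes "0<\<phi>" "\<phi><1" "0<g" "g\<le>1" "0<a" "a\<le>b" "b\<le>1"
  shows "R (2-g-b+g*b*\<phi>) ((1-g)*(1-b)) \<le> R (2-g-a+g*a*\<phi>) ((1-g)*(1-a))"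
proof -
  define Ba where "Ba = 2-g-a+g*a*\<phi>"
  define Bb where "Bb = 2-g-b+g*b*\<phi>"
  define Ca where "Ca = (1-g)*(1-a)"
  define Cb where "Cb = (1-g)*(1-b)"
  define p where "p t z = z^2 - (2-g-t+g*t*\<phi>)*z + (1-g)*(1-t)" for t z :: real
  have pa: "p a z = z^2 - Ba*z + Ca" for z unfolding p_def Ba_def Ca_def ..
  have pb: "p b z = z^2 - Bb*z + Cb" for z unfolding p_def Bb_def Cb_def ..
  have pid: "p t z = (z-(1-g))*(z-(1-t)) - g*t*\<phi>*z" for t z
    unfolding p_def by (simp add: algebra_simps power2_eq_square)
  have pdiff: "p a z = p b z + (a-b)*(z*(1-g*\<phi>) - (1-g))" for z
    unfolding p_def by (simp add: algebra_simps)
  have Ca0: "0 \<le> Ca" unfolding Ca_def using assms by simp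
  show ?thesis unfolding Ba_def[symmetric] Bb_def[symmetric] Ca_def[symmetric] Cb_def[symmetric]
  proof (cases "0 \<le> Bb^2 - 4*Cb")
    case False
    have "Cb \<le> Ca" unfolding Ca_def Cb_def using assms by (intro mult_left_mono) auto
    then have "sqrt Cb \<le> sqrt Ca" by simp
    also have "\<dots> \<le> R Ba Ca" using R_sqrtC[OF Ca0] .
    finally have "sqrt Cb \<le> R Ba Ca" .
    moreover have "R Bb Cb = sqrt Cb" using False unfolding R_def by simp
    ultimately show "R Bb Cb \<le> R Ba Ca" by simp
  next
    case True
    define x where "x = (Bb + sqrt (Bb^2 - 4*Cb))/2"
    have "g*b*\<phi> \<ge> 0" using assms by simp
    then have Bb0: "Bb \<ge> 0" unfolding Bb_def using assms by linarith
    have Rb: "R Bb Cb = x" unfolding R_def x_def using True Bb0 by simp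
    have ss: "sqrt (Bb^2 - 4*Cb) * sqrt (Bb^2 - 4*Cb) = Bb^2 - 4*Cb" using True by simp
    have px: "p b x = 0" unfolding pb x_def using root_eq(1)[OF ss] .
    define k where "k = 1-g*\<phi>"
    have "g*\<phi> \<le> g*1" using assms by (intro mult_left_mono) auto
    then have gphi: "g*\<phi> \<le> g" by simp
    have "g*\<phi> \<le> 1*\<phi>" using assms by (intro mult_right_mono) auto
    then have k0: "k > 0" unfolding k_def using assms by linarith
    define z0 where "z0 = (1-g)/k"
    have hz: "z0*k = 1-g" unfolding z0_def using k0 by simp
    have z00: "z0 \<ge> 0" unfolding z0_def using k0 assms by simp
    have z01: "z0 \<le> 1" unfolding z0_def using k0 gphi by (simp add: k_def)
    have hz2: "z0 - (1-g) = g*\<phi>*z0" using hz unfolding k_def by (simp add: algebra_simps)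
    have "p b z0 = (g*\<phi>*z0)*(z0-(1-b)) - g*b*\<phi>*z0" unfolding pid hz2 ..
    also have "\<dots> = (g*\<phi>*z0)*(z0-1)" by (simp add: algebra_simps)
    finally have "p b z0 = (g*\<phi>*z0)*(z0-1)" .
    moreover have "(g*\<phi>*z0)*(z0-1) \<le> 0" using assms z00 z01 by (intro mult_nonneg_nonpos) auto
    ultimately have "z0^2 - Bb*z0 + Cb \<le> 0" using pb by simp
    then have zx: "z0 \<le> x" using R_ge[of z0 Bb Cb] unfolding x_def by blast
    then have x0: "x \<ge> 0" using z00 by linarith
    from zx have "z0*k \<le> x*k" using k0 by (intro mult_right_mono) auto
    then have "x*k - (1-g) \<ge> 0" using hz by simp
    then have "(a-b)*(x*(1-g*\<phi>) - (1-g)) \<le> 0" using assms unfolding k_def by (intro mult_nonpos_nonneg) auto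
    then have "p a x \<le> 0" using pdiff px by simp
    then have "x^2 - Ba*x + Ca \<le> 0" using pa[of x] by simp
    then have "\<bar>x\<bar> \<le> R Ba Ca" using R_ge[of x Ba Ca] by blast
    then show "R Bb Cb \<le> R Ba Ca" using Rb x0 by (simp add: abs_of_nonneg)
  qed
qed



lemma M2:
  fixes \<phi> s a b :: real
  assumes "0<\<phi>" "\<phi><1" "1\<le>s" "0<a" "a\<le>b" "b\<le>1"
  shows "R (2-s-b+s*b*\<phi>) ((1-s)*(1-b)) \<le> R (2-s-a+s*a*\<phi>) ((1-s)*(1-a))"
proof -
  define Ba where "Ba = 2-s-a+s*a*\<phi>"
  define Bb where "Bb = 2-s-b+s*b*\<phi>"
  define Ca where "Ca = (1-s)*(1-a)"
  define Cb where "Cb = (1-s)*(1-b)"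
  define w where "w = s - 1"
  define p where "p t z = z^2 - (2-s-t+s*t*\<phi>)*z + (1-s)*(1-t)" for t z :: real
  have pa: "p a z = z^2 - Ba*z + Ca" for z unfolding p_def Ba_def Ca_def ..
  have pb: "p b z = z^2 - Bb*z + Cb" for z unfolding p_def Bb_def Cb_def ..
  have pid: "p t z = (z+w)*(z-(1-t)) - s*t*\<phi>*z" for t z
    unfolding p_def w_def by (simp add: algebra_simps power2_eq_square)
  have pdiff: "p a z = p b z + (a-b)*(z*(1-s*\<phi>) + w)" for z
    unfolding p_def w_def by (simp add: algebra_simps)
  have w0: "w \<ge> 0" unfolding w_def using assms by simp
  have Cb0: "Cb \<le> 0" unfolding Cb_def using assms by (intro mult_nonpos_nonneg) auto
  have sbphi: "s*b*\<phi> > 0" using assms by simp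
  have "s*\<phi> \<le> s*1" using assms by (intro mult_left_mono) auto
  then have sphi: "s*\<phi> \<le> s" by simp
  have key: "x*(1-s*\<phi>) + w \<ge> 0" if px: "p b x = 0" for x
  proof (cases "x < 0")
    case True
    have xw: "x \<ge> -w"
    proof (rule ccontr)
      assume "\<not> x \<ge> -w"
      then have "x + w < 0" by simp
      moreover have "x - (1-b) < 0" using True assms by simp
      ultimately have "(x+w)*(x-(1-b)) > 0" by (rule mult_neg_neg)
      moreover have "s*b*\<phi>*x < 0" using sbphi True by (rule mult_pos_neg)
      ultimately have "p b x > 0" unfolding pid by simp
      then show False using px by simp
    qed
    show ?thesis
    proof (cases "s*\<phi> \<ge> 1")
      case True
      have "x*(1-s*\<phi>) \<ge> 0" using \<open>x<0\<close> True by (intro mult_nonpos_nonpos) auto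
      then show ?thesis using w0 by simp
    next
      case False
      have "x*(s*\<phi>) \<le> 0" using \<open>x<0\<close> assms by (intro mult_nonpos_nonneg) auto
      then have "x*(1-s*\<phi>) \<ge> x" by (simp add: algebra_simps)
      then show ?thesis using xw by simp
    qed
  next
    case False
    show ?thesis
    proof (cases "s*\<phi> \<le> 1")
      case True
      have "x*(1-s*\<phi>) \<ge> 0" using False True by simp
      then show ?thesis using w0 by simp
    next
      case sp: False
      define z1 where "z1 = w/(s*\<phi>-1)"
      have hz: "z1*(s*\<phi>-1) = w" unfolding z1_def using sp by simp
      have z11: "z1 \<ge> 1" unfolding z1_def using sp sphi by (simp add: w_def le_divide_eq)
      have hz2: "z1 + w = s*\<phi>*z1" using hz by (simp add: algebra_simps)
      have "p b z1 = (s*\<phi>*z1)*(z1-(1-b)) - s*b*\<phi>*z1" unfolding pid hz2 ..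
      also have "\<dots> = (s*\<phi>*z1)*(z1-1)" by (simp add: algebra_simps)
      finally have pz1: "p b z1 = (s*\<phi>*z1)*(z1-1)" .
      have "(s*\<phi>*z1)*(z1-1) \<ge> 0" using assms z11 by simp
      then have pz1': "p b z1 \<ge> 0" using pz1 by simp
      show ?thesis
      proof (rule ccontr)
        assume "\<not> 0 \<le> x * (1 - s * \<phi>) + w"
        then have "z1*(s*\<phi>-1) < x*(s*\<phi>-1)" using hz by (simp add: algebra_simps)
        then have xz: "z1 < x" using sp by (simp add: mult_less_cancel_right)
        have e1: "x*(Bb - x) = Cb" using px unfolding pb by (simp add: algebra_simps power2_eq_square)
        have e2: "p b x - p b z1 = (x - z1)*(x + z1 - Bb)" unfolding pb by (simp add: algebra_simps power2_eq_square)
        then have "(x - z1)*(x + z1 - Bb) \<le> 0" using px pz1' by simp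
        then have "x + z1 - Bb \<le> 0" using xz by (simp add: mult_le_0_iff)
        then have "Bb - x \<ge> 1" using z11 by simp
        moreover have "x > 1" using xz z11 by simp
        ultimately have "x*(Bb-x) > 0" by simp
        then show False using e1 Cb0 by simp
      qed
    qed
  qed
  define d where "d = sqrt (Bb^2 - 4*Cb)"
  have D0: "0 \<le> Bb^2 - 4*Cb" using Cb0 zero_le_power2[of Bb] by linarith
  have ss: "d * d = Bb^2 - 4*Cb" unfolding d_def using D0 by simp
  have d0: "d \<ge> 0" unfolding d_def using D0 by simp
  have bound: "\<bar>x\<bar> \<le> R Ba Ca" if px: "p b x = 0" for x
  proof -
    have "(a-b)*(x*(1-s*\<phi>) + w) \<le> 0" using key[OF px] assms by (intro mult_nonpos_nonneg) auto
    then have "p a x \<le> 0" using pdiff px by simp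
    then have "x^2 - Ba*x + Ca \<le> 0" using pa[of x] by simp
    then show ?thesis using R_ge[of x Ba Ca] by blast
  qed
  have r1: "\<bar>Bb/2 + d/2\<bar> \<le> R Ba Ca"
    using bound[of "(Bb+d)/2"] root_eq(1)[OF ss] unfolding pb by (simp add: add_divide_distrib)
  have r2: "\<bar>Bb/2 - d/2\<bar> \<le> R Ba Ca"
    using bound[of "(Bb-d)/2"] root_eq(2)[OF ss] unfolding pb by (simp add: diff_divide_distrib)
  have "R Bb Cb = (\<bar>Bb\<bar> + d)/2"
    unfolding R_def d_def using D0 by simp
  also have "\<dots> = max \<bar>Bb/2 + d/2\<bar> \<bar>Bb/2 - d/2\<bar>"
    using max_abs_aux[OF d0] by simp
  finally have eq: "R Bb Cb = max \<bar>Bb/2 + d/2\<bar> \<bar>Bb/2 - d/2\<bar>" .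
  have "R Bb Cb \<le> R Ba Ca" unfolding eq using r1 r2 by (rule max.boundedI)
  then show ?thesis unfolding Ba_def Bb_def Ca_def Cb_def .
qed


theorem mainTheorem12:
  fixes \<phi> :: real
  assumes "0 < \<phi>" and "\<phi> < 1"
  defines "f \<equiv> rootmax \<phi>"
  shows
    "(\<forall>g1\<in>{0<..1}. \<forall>a b. 0 < a \<and> a \<le> b \<and> b \<le> 1 \<longrightarrow> f g1 b \<le> f g1 a)
   \<and> (\<forall>g2\<in>{0<..1}. \<forall>a b. 0 < a \<and> a \<le> b \<and> b \<le> 1 \<longrightarrow> f b g2 \<le> f a g2)
   \<and> (\<forall>g1\<in>{0<..1}. \<forall>g2\<in>{0<..1}. f 1 1 \<le> f g1 g2)
   \<and> (\<forall>g2\<in>{1..}. \<forall>a b. 0 < a \<and> a \<le> b \<and> b \<le> 1 \<longrightarrow> f b g2 \<le> f a g2)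
   \<and> (\<forall>g1\<in>{1..}. \<forall>a b. 0 < a \<and> a \<le> b \<and> b \<le> 1 \<longrightarrow> f g1 b \<le> f g1 a)
   \<and> (INF p\<in>{0<..1} \<times> {1..}. f (fst p) (snd p)) = (INF g2\<in>{1..}. f 1 g2)
   \<and> (INF p\<in>{1..} \<times> {0<..1}. f (fst p) (snd p)) = (INF g1\<in>{1..}. f g1 1)"
proof -
  have rm: "f x y = R (2-x-y+x*y*\<phi>) ((1-x)*(1-y))" for x y
    unfolding f_def rootmax_def by (rule Max_roots)
  have sym: "f x y = f y x" for x y
  proof -
    have e1: "2-x-y+x*y*\<phi> = 2-y-x+y*x*\<phi>" and e2: "(1-x)*(1-y) = (1-y)*(1-x)" by (simp_all add: algebra_simps)
    show ?thesis unfolding rm e1 e2 ..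
  qed
  have nn: "0 \<le> f x y" for x y unfolding rm by (rule R_nonneg)
  have P1: "f g1 b \<le> f g1 a" if "0 < g1" "g1 \<le> 1" "0 < a" "a \<le> b" "b \<le> 1" for g1 a b
    unfolding rm using M1[OF assms(1,2) that] .
  have P2: "f b g2 \<le> f a g2" if "0 < g2" "g2 \<le> 1" "0 < a" "a \<le> b" "b \<le> 1" for g2 a b
    using P1[OF that] sym[of b g2] sym[of a g2] by simp
  have P5: "f g1 b \<le> f g1 a" if "1 \<le> g1" "0 < a" "a \<le> b" "b \<le> 1" for g1 a b
    unfolding rm using M2[OF assms(1,2) that] .
  have P4: "f b g2 \<le> f a g2" if "1 \<le> g2" "0 < a" "a \<le> b" "b \<le> 1" for g2 a b
    using P5[OF that] sym[of b g2] sym[of a g2] by simp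
  have P3: "f 1 1 \<le> f g1 g2" if "0 < g1" "g1 \<le> 1" "0 < g2" "g2 \<le> 1" for g1 g2
  proof -
    have "f 1 1 \<le> f g1 1" using P2[of 1 g1 1] that by simp
    also have "\<dots> \<le> f g1 g2" using P1[of g1 g2 1] that by simp
    finally show ?thesis .
  qed
  have bdd: "bdd_below ((\<lambda>p. f (fst p) (snd p)) ` A)" for A
    by (rule bdd_belowI2[of _ 0]) (rule nn)
  have bdd1: "bdd_below ((\<lambda>y. f 1 y) ` A)" for A
    by (rule bdd_belowI2[of _ 0]) (rule nn)
  have bdd2: "bdd_below ((\<lambda>x. f x 1) ` A)" for A
    by (rule bdd_belowI2[of _ 0]) (rule nn)
  have I1: "(INF p\<in>{0<..1} \<times> {1..}. f (fst p) (snd p)) = (INF g2\<in>{1..}. f 1 g2)"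
  proof (rule antisym)
    show "(INF p\<in>{0<..1} \<times> {1..}. f (fst p) (snd p)) \<le> (INF g2\<in>{1..}. f 1 g2)"
    proof (rule cINF_mono)
      have "(1::real) \<in> {1..}" by simp
      then show "{1::real..} \<noteq> {}" by (metis empty_iff)
      show "bdd_below ((\<lambda>p. f (fst p) (snd p)) ` ({0<..1} \<times> {1..}))" by (rule bdd)
      fix m :: real assume "m \<in> {1..}"
      then have "(1, m) \<in> {0<..1::real} \<times> {1..}" by auto
      then show "\<exists>n\<in>{0<..1} \<times> {1..}. f (fst n) (snd n) \<le> f 1 m" by force
    qed
    show "(INF g2\<in>{1..}. f 1 g2) \<le> (INF p\<in>{0<..1} \<times> {1..}. f (fst p) (snd p))"
    proof (rule cINF_greatest)
      have "(1,1) \<in> {0<..1::real} \<times> {1::real..}" by simp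
      then show "{0<..1::real} \<times> {1::real..} \<noteq> {}" by (metis empty_iff)
      fix p :: "real \<times> real" assume p: "p \<in> {0<..1} \<times> {1..}"
      have "snd p \<in> {1..}" using p by auto
      then have "(INF g2\<in>{1..}. f 1 g2) \<le> f 1 (snd p)" by (rule cINF_lower[OF bdd1])
      also have "\<dots> \<le> f (fst p) (snd p)" using P4[of "snd p" "fst p" 1] p by auto
      finally show "(INF g2\<in>{1..}. f 1 g2) \<le> f (fst p) (snd p)" .
    qed
  qed
  have I2: "(INF p\<in>{1..} \<times> {0<..1}. f (fst p) (snd p)) = (INF g1\<in>{1..}. f g1 1)"
  proof (rule antisym)
    show "(INF p\<in>{1..} \<times> {0<..1}. f (fst p) (snd p)) \<le> (INF g1\<in>{1..}. f g1 1)"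
    proof (rule cINF_mono)
      have "(1::real) \<in> {1..}" by simp
      then show "{1::real..} \<noteq> {}" by (metis empty_iff)
      show "bdd_below ((\<lambda>p. f (fst p) (snd p)) ` ({1..} \<times> {0<..1}))" by (rule bdd)
      fix m :: real assume "m \<in> {1..}"
      then have "(m, 1) \<in> {1..} \<times> {0<..1::real}" by auto
      then show "\<exists>n\<in>{1..} \<times> {0<..1}. f (fst n) (snd n) \<le> f m 1" by force
    qed
    show "(INF g1\<in>{1..}. f g1 1) \<le> (INF p\<in>{1..} \<times> {0<..1}. f (fst p) (snd p))"
    proof (rule cINF_greatest)
      have "(1,1) \<in> {1::real..} \<times> {0<..1::real}" by simp
      then show "{1::real..} \<times> {0<..1::real} \<noteq> {}" by (metis empty_iff)
      fix p :: "real \<times> real" assume p: "p \<in> {1..} \<times> {0<..1}"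
      have "fst p \<in> {1..}" using p by auto
      then have "(INF g1\<in>{1..}. f g1 1) \<le> f (fst p) 1" by (rule cINF_lower[OF bdd2])
      also have "\<dots> \<le> f (fst p) (snd p)" using P5[of "fst p" "snd p" 1] p by auto
      finally show "(INF g1\<in>{1..}. f g1 1) \<le> f (fst p) (snd p)" .
    qed
  qed
  show ?thesis
    apply (intro conjI)
    subgoal using P1 by auto
    subgoal using P2 by auto
    subgoal using P3 by auto
    subgoal using P4 by auto
    subgoal using P5 by auto
    subgoal by (rule I1)
    subgoal by (rule I2)
    done
qed

end
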